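(* Let $p$ be an odd prime, let $\mathcal{S}$ be the affine surface over $\mathbb{F}_{p^2}$ given by $y^p-y=x^{p+1}z^2+x^2z^{p+1}$, let $T=\{(x,y,z)\in\mathcal{S}(\mathbb{F}_{p^2}): z\ne 0\}$, and for integers $2\le\rho_1,\rho_2\le p$ let $$V_{\rho_1,\rho_2}=\langle x^iy^jz^k: 0\le i\le p-\rho_1,\ 0\le j\le p-\rho_2,\ 0\le k\le p^2-2p\rangle.$$ Then the evaluation code $C=C(V_{\rho_1,\rho_2},T)$ has hierarchical locality, where for the position of a point $P_i=(a,b,c)\in T$ the lower code is the puncturing of $C$ to the fiber $\{(a,b+\delta,c):\delta\in\mathbb{F}_p\}$ and the middle code is the puncturing of $C$ to the points of $T$ with $z$-coordinate $c$. Specifically: (1) each lower code has length $n_2=p$, dimension at most $s_2=p-\rho_2+1$, and minimum distance at least $d_2=\rho_2$; (2) each middle code has length $n_1\le 2p^2-p$, dimension at most $s_1=(p-\rho_2+1)(p-\rho_1+1)$, and minimum distance at least $d_1=\rho_1\rho_2$; (3) the full code has length $n=2p^4-3p^3+2p^2-p$, dimension $k=(p-\rho_2+1)(p-\rho_1+1)(p^2-2p+1)$, and minimum distance $d\ge(\rho_1+\rho_2-3)p+(\rho_1+\rho_2)$.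
   Context: For an ordered finite set $T=\{P_1,\dots,P_n\}$ of points and a vector space $V$ of polynomials, the evaluation code is $C(V,T)=\{(g(P_1),\dots,g(P_n)):g\in V\}$. The puncturing of a code to a set of positions is the projection of all codewords onto those positions. Length, dimension, and minimum (Hamming) distance are the usual linear-code parameters. *)

theory Defs
  imports Complex_Main "HOL-Library.Function_Algebras" "HOL-Computational_Algebra.Primes"
begin

type_synonym 'a pt = "'a \<times> 'a \<times> 'a"

definition surfS :: "nat \<Rightarrow> ('a::field) pt set" where
  "surfS p = {(x,y,z). y^p - y = x^(p+1) * z^2 + x^2 * z^(p+1)}"

definition Tset :: "nat \<Rightarrow> ('a::field) pt set" where
  "Tset p = {P \<in> surfS p. snd (snd P) \<noteq> 0}"

definition Vspace :: "nat \<Rightarrow> nat \<Rightarrow> nat \<Rightarrow> (('a::field) pt \<Rightarrow> 'a) set" where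
  "Vspace p r1 r2 = {g. \<exists>c :: nat \<Rightarrow> nat \<Rightarrow> nat \<Rightarrow> 'a.
      g = (\<lambda>(x,y,z). \<Sum>i\<le>p-r1. \<Sum>j\<le>p-r2. \<Sum>k\<le>p^2-2*p. c i j k * x^i * y^j * z^k)}"

(* codewords indexed by the positions (points of T); a word is a function on points,
   extended by 0 outside the index set *)
definition evcode :: "('b \<Rightarrow> 'a::field) set \<Rightarrow> 'b set \<Rightarrow> ('b \<Rightarrow> 'a) set" where
  "evcode V T = {(\<lambda>P. if P \<in> T then g P else 0) | g. g \<in> V}"

definition puncture :: "('b \<Rightarrow> 'a::field) set \<Rightarrow> 'b set \<Rightarrow> ('b \<Rightarrow> 'a) set" where
  "puncture C S = (\<lambda>f P. if P \<in> S then f P else 0) ` C"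

definition weight :: "'b set \<Rightarrow> ('b \<Rightarrow> 'a::zero) \<Rightarrow> nat" where
  "weight S f = card {P \<in> S. f P \<noteq> 0}"

definition code_dim :: "('b \<Rightarrow> 'a::field) set \<Rightarrow> nat" where
  "code_dim C = vector_space.dim (\<lambda>(c::'a) f x. c * f x) C"

definition prime_subfield :: "('a::field) set" where
  "prime_subfield = range of_nat"

definition fiber :: "('a::field) \<Rightarrow> 'a \<Rightarrow> 'a \<Rightarrow> 'a pt set" where
  "fiber a b c = {(a, b + d, c) | d. d \<in> prime_subfield}"

definition zslice :: "('a::field) pt set \<Rightarrow> 'a \<Rightarrow> 'a pt set" where
  "zslice T c = {P \<in> T. snd (snd P) = c}"

end

theory Submission
  imports Defs "HOL-Number_Theory.Residues" "HOL-Computational_Algebra.Polynomial"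
begin


lemma sum_fun_apply: "(sum f A) x = sum (\<lambda>a. f a x) A"
  by (induction A rule: infinite_finite_induct) auto

lemma arith1:
  fixes p :: nat assumes "p \<ge> 3"
  shows "p*(2*(p-1)*p + (p^2-1-2*(p-1))*(2*p-1)) = 2*p^4 - 3*p^3 + 2*p^2 - p"
proof -
  obtain m where m: "p = m + 3" using assms by (metis add.commute le_Suc_ex)
  have a: "p - 1 = m + 2" "p^2 - 1 - 2*(p-1) = m*m + 4*m + 4" "2*p - 1 = 2*m+5"
    unfolding m by (simp_all add: power2_eq_square algebra_simps)
  have b: "2*p^4 - 3*p^3 + 2*p^2 - p = 2*m^4 + 21*m^3 + 83*m^2 + 146*m + 96"
    unfolding m by (simp add: power2_eq_square power3_eq_cube power4_eq_xxxx algebra_simps)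
  show ?thesis unfolding a b unfolding m by (simp add: power2_eq_square power3_eq_cube power4_eq_xxxx algebra_simps)
qed

locale ffp =
  fixes p :: nat and ty :: "'a::field itself"
  assumes pprime: "prime p" and podd: "odd p" and pcard: "card (UNIV :: 'a set) = p^2"
begin

lemma fin: "finite (UNIV :: 'a set)"
  using pcard pprime by (metis card.infinite power_not_zero prime_gt_0_nat less_numeral_extra(3))

lemma p_ge3: "p \<ge> 3"
proof -
  have "p \<ge> 2" using pprime prime_ge_2_nat by blast
  moreover have "p \<noteq> 2" using podd by auto
  ultimately show ?thesis by linarith
qed

lemma charp: "CHAR('a) = p"
proof -
  have pos: "CHAR('a) > 0" using finite_imp_CHAR_pos[OF fin] .
  have pr: "prime CHAR('a)" using prime_CHAR_semidom[OF pos] .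
  have "CHAR('a) dvd p^2" using CHAR_dvd_CARD[where 'a='a] pcard by simp
  then have "CHAR('a) dvd p" using pr prime_dvd_power by blast
  then show ?thesis using pr pprime by (metis primes_dvd_imp_eq)
qed

lemma ofp: "of_nat p = (0::'a)"
  using charp of_nat_CHAR[where 'a='a] by simp

lemma frob_add: "((x::'a) + y)^p = x^p + y^p"
  by (rule freshmans_dream) (simp_all add: charp pprime)

lemma frob_neg: "(- (x::'a))^p = - (x^p)"
  using minus_power_prime_CHAR[of p x] charp pprime by simp

lemma frob_diff: "((x::'a) - y)^p = x^p - y^p"
  using frob_add[of x "-y"] frob_neg[of y] by simp

lemma pow_card: "(x::'a) ^ (p^2) = x"
proof (cases "x = 0")
  case False
  have fU: "finite (UNIV - {0::'a})" using fin by simp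
  have "x * (\<Prod>y\<in>UNIV-{0}. x * y) = x * x ^ (card (UNIV :: 'a set) - 1) * \<Prod>(UNIV-{0::'a})"
    using fin by (simp add: prod.distrib mult_ac card_Diff_singleton)
  also have "x * x ^ (card (UNIV :: 'a set) - 1) = x ^ Suc (card (UNIV :: 'a set) - 1)"
    by (subst power_Suc) auto
  also have "Suc (card (UNIV :: 'a set) - 1) = p^2"
    using pcard pprime by (simp add: prime_gt_0_nat)
  also have "(\<Prod>y\<in>UNIV-{0}. x * y) = (\<Prod>y\<in>UNIV-{0::'a}. y)"
    by (rule prod.reindex_bij_witness[of _ "\<lambda>y. y / x" "\<lambda>y. x * y"]) (use False in auto)
  finally show ?thesis using fU by simp
qed (use pprime prime_gt_0_nat in auto)

lemma pow_pp: "((x::'a) ^ p) ^ p = x"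
  using pow_card[of x] by (simp add: power_mult[symmetric] power2_eq_square)

lemma card_roots_pX: "card {x::'a. x^p + u*x = s} \<le> p"
proof -
  define q where "q = monom (1::'a) p + [: -s, u :]"
  have dq: "degree q = p"
  proof -
    have "degree [: -s, u :] \<le> 1" using degree_pCons_le[of "-s" "[: u :]"] by simp
    then have "degree [: -s, u :] < degree (monom (1::'a) p)"
      using p_ge3 by (simp add: degree_monom_eq)
    then show ?thesis unfolding q_def by (simp add: degree_add_eq_left degree_monom_eq)
  qed
  have q0: "q \<noteq> 0" using dq p_ge3 by auto
  have "{x::'a. x^p + u*x = s} = {x. poly q x = 0}"
    unfolding q_def by (auto simp: poly_monom algebra_simps)
  then show ?thesis using card_poly_roots_bound[OF q0] dq by simp
qed


lemma ofnat_pow: "(of_nat n :: 'a)^p = of_nat n"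
proof (induction n)
  case 0 then show ?case using p_ge3 by simp
next
  case (Suc n)
  then show ?case using frob_add[of "of_nat n" 1] by (simp add: add.commute)
qed

lemma Fp_alt: "(prime_subfield :: 'a set) = of_nat ` {..<p}"
proof -
  have e: "of_nat n = (of_nat (n mod p) :: 'a)" for n
  proof -
    have "of_nat n = (of_nat (p * (n div p) + n mod p) :: 'a)" by simp
    also have "\<dots> = of_nat (n mod p)" by (simp only: of_nat_add of_nat_mult ofp) simp
    finally show ?thesis .
  qed
  have "n mod p < p" for n using p_ge3 by simp
  show ?thesis
  proof (rule Set.set_eqI)
    fix x :: 'a
    show "x \<in> prime_subfield \<longleftrightarrow> x \<in> of_nat ` {..<p}"
    proof
      assume "x \<in> prime_subfield"
      then obtain n where "x = of_nat n" unfolding prime_subfield_def by auto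
      then have "x = of_nat (n mod p)" using e by simp
      moreover have "n mod p \<in> {..<p}" using p_ge3 by simp
      ultimately show "x \<in> of_nat ` {..<p}" by blast
    next
      assume "x \<in> of_nat ` {..<p}"
      then show "x \<in> prime_subfield" unfolding prime_subfield_def by auto
    qed
  qed
qed

lemma card_Fp: "card (prime_subfield :: 'a set) = p"
proof -
  have "inj_on (of_nat :: nat \<Rightarrow> 'a) {..<p}"
  proof
    fix m n assume "m \<in> {..<p}" "n \<in> {..<p}" "(of_nat m :: 'a) = of_nat n"
    then show "m = n" using of_nat_eq_iff_cong_CHAR[where 'a='a, of m n] charp
      by (simp add: cong_def)
  qed
  then show ?thesis unfolding Fp_alt by (simp add: card_image)
qed

lemma Fp_char: "(prime_subfield :: 'a set) = {x. x^p = x}"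
proof -
  have sub: "(prime_subfield :: 'a set) \<subseteq> {x. x^p = x}"
    unfolding prime_subfield_def using ofnat_pow by auto
  have "card {x::'a. x^p = x} \<le> p"
    using card_roots_pX[of "-1" 0] by simp
  moreover have "finite {x::'a. x^p = x}" by (rule finite_subset[OF subset_UNIV fin])
  ultimately show ?thesis using sub card_Fp by (metis card_seteq)
qed

lemma Fp_iff: "x \<in> (prime_subfield :: 'a set) \<longleftrightarrow> x^p = x"
  using Fp_char by auto

lemma zero_Fp: "(0::'a) \<in> prime_subfield"
  unfolding prime_subfield_def by (metis of_nat_0 rangeI)

lemma Tr_Fp: "((y::'a)^p + y)^p = y^p + y"
  using frob_add pow_pp by (simp add: add.commute)

lemma K_card: "card {w::'a. w^p + w = 0} = p"
proof -
  define f where "f s = card {y::'a. y^p + y = s}" for s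
  have fle: "f s \<le> p" for s unfolding f_def using card_roots_pX[of 1 s] by simp
  have U: "(UNIV :: 'a set) = (\<Union>s\<in>prime_subfield. {y. y^p + y = s})"
    using Tr_Fp Fp_iff by auto
  have "p^2 = card (UNIV :: 'a set)" using pcard by simp
  also have "\<dots> \<le> (\<Sum>s\<in>prime_subfield. f s)"
    unfolding f_def by (subst U) (rule card_UN_le, rule finite_subset[OF subset_UNIV fin])
  also have "\<dots> = f 0 + (\<Sum>s\<in>prime_subfield - {0}. f s)"
    using zero_Fp finite_subset[OF subset_UNIV fin] by (simp add: sum.remove)
  also have "(\<Sum>s\<in>prime_subfield - {0}. f s) \<le> (\<Sum>s\<in>(prime_subfield::'a set) - {0}. p)"
    by (rule sum_mono) (rule fle)
  also have "\<dots> = (p - 1) * p" using card_Fp zero_Fp by (simp add: card_Diff_singleton)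
  finally have "p^2 \<le> f 0 + (p-1)*p" by simp
  moreover have "(p-1)*p = p*p - p" by (simp add: diff_mult_distrib)
  ultimately have h1: "p*p \<le> f 0 + (p*p - p)" by (simp add: power2_eq_square)
  have h2: "p \<le> p*p" by simp
  from h1 h2 have "f 0 \<ge> p" by linarith
  then show ?thesis using fle[of 0] unfolding f_def by simp
qed

lemma w_ex: "\<exists>w::'a. w^(p-1) = -1"
proof -
  have "{w::'a. w^p + w = 0} \<noteq> {0}"
  proof
    assume "{w::'a. w^p + w = 0} = {0}"
    then have "card {w::'a. w^p + w = 0} = 1" by simp
    then show False using K_card p_ge3 by simp
  qed
  moreover have "(0::'a) \<in> {w. w^p + w = 0}" using p_ge3 by simp
  ultimately obtain w :: 'a where w: "w \<noteq> 0" "w^p + w = 0" by blast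
  obtain m where m: "p = Suc m" using p_ge3 by (cases p) auto
  have "w^p = w^(p-1) * w" using m by (simp add: power_Suc2)
  then have "w^(p-1) * w = (-1) * w" using w by (simp add: eq_neg_iff_add_eq_0)
  then show ?thesis using w by (metis mult_right_cancel)
qed

lemma sol_set:
  assumes "(y0::'a)^p - y0 = t"
  shows "{y. y^p - y = t} = (\<lambda>d. y0 + d) ` prime_subfield"
proof -
  have iff: "y^p - y = t \<longleftrightarrow> y - y0 \<in> prime_subfield" for y
    using assms frob_diff[of y y0] Fp_iff[of "y - y0"] by (auto simp: algebra_simps)
  show ?thesis
  proof (rule Set.set_eqI)
    fix y show "y \<in> {y. y^p - y = t} \<longleftrightarrow> y \<in> (\<lambda>d. y0 + d) ` prime_subfield"
    proof
      assume "y \<in> {y. y^p - y = t}" then have "y - y0 \<in> prime_subfield" using iff by simp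
      then show "y \<in> (\<lambda>d. y0 + d) ` prime_subfield" by (rule rev_image_eqI) simp
    next
      assume "y \<in> (\<lambda>d. y0 + d) ` prime_subfield"
      then obtain d where "d \<in> prime_subfield" "y = y0 + d" by auto
      then show "y \<in> {y. y^p - y = t}" using iff by simp
    qed
  qed
qed

lemma sol_card:
  assumes "(y0::'a)^p - y0 = t"
  shows "card {y. y^p - y = t} = p"
proof -
  have "inj_on (\<lambda>d. y0 + d) (prime_subfield :: 'a set)" by (rule inj_onI) simp
  then show ?thesis using sol_set[OF assms] card_Fp by (simp add: card_image)
qed

lemma sol_exists:
  assumes "(t::'a)^p + t = 0"
  shows "\<exists>y. y^p - y = t"
proof -
  define phi where "phi y = y^p - y" for y :: 'a
  have im: "range phi \<subseteq> {w. w^p + w = 0}"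
    unfolding phi_def using frob_diff pow_pp by auto
  have fib: "card {y. phi y = s} \<le> p" for s
    unfolding phi_def using card_roots_pX[of "-1" s] by simp
  have U: "(UNIV :: 'a set) = (\<Union>s\<in>range phi. {y. phi y = s})" by blast
  have "p * p = card (UNIV :: 'a set)" using pcard by (simp add: power2_eq_square)
  also have "\<dots> \<le> (\<Sum>s\<in>range phi. card {y. phi y = s})"
  proof -
    have "card (\<Union>s\<in>range phi. {y. phi y = s}) \<le> (\<Sum>s\<in>range phi. card {y. phi y = s})"
      by (rule card_UN_le, rule finite_subset[OF subset_UNIV fin])
    then show ?thesis by (simp only: U[symmetric])
  qed
  also have "\<dots> \<le> (\<Sum>s\<in>range phi. p)" by (rule sum_mono) (rule fib)
  also have "\<dots> = card (range phi) * p" by simp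
  finally have "p \<le> card (range phi)" using p_ge3 by simp
  moreover have "finite {w::'a. w^p + w = 0}" by (rule finite_subset[OF subset_UNIV fin])
  ultimately have "range phi = {w. w^p + w = 0}"
    using im K_card card_seteq[of "{w::'a. w^p + w = 0}" "range phi"] by simp
  then have "t \<in> range phi" using assms by simp
  then obtain y where "t = phi y" by blast
  then show ?thesis unfolding phi_def by blast
qed


definition tt :: "'a \<Rightarrow> 'a \<Rightarrow> 'a" where
  "tt x z = x^(p+1)*z^2 + x^2*z^(p+1)"

definition Xs :: "'a \<Rightarrow> 'a set" where
  "Xs z = {x. tt x z ^ p + tt x z = 0}"

lemma surf_iff: "(x,y,z) \<in> (surfS p :: 'a pt set) \<longleftrightarrow> y^p - y = tt x z"
  unfolding surfS_def tt_def by simp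

lemma pow_comm: "((a::'a)^n)^p = (a^p)^n"
  by (simp add: power_mult[symmetric] mult.commute)

lemma Tr_tt: "tt x z ^ p + tt x z = x^2*z^2*(x^(p-1) + z^(p-1))*(1 + x^(p-1)*z^(p-1))"
proof -
  obtain m where m: "p = Suc m" using p_ge3 by (cases p) auto
  define u where "u = x^m"
  define v where "v = z^m"
  have xp: "x^p = x*u" unfolding u_def m by simp
  have zp: "z^p = z*v" unfolding v_def m by simp
  have "tt x z ^ p = (x^(p+1))^p*(z^2)^p + (x^2)^p*(z^(p+1))^p"
    unfolding tt_def by (simp add: frob_add power_mult_distrib)
  also have "(x^(p+1))^p = x * x^p"
    using pow_comm[of x "p+1"] pow_pp[of x] by (simp only: power_add power_one_right)
  also have "(z^(p+1))^p = z * z^p"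
    using pow_comm[of z "p+1"] pow_pp[of z] by (simp only: power_add power_one_right)
  also have "(z^2)^p = (z^p)^2" by (rule pow_comm)
  also have "(x^2)^p = (x^p)^2" by (rule pow_comm)
  also have "x * x^p * (z^p)^2 + (x^p)^2 * (z * z^p) = x^2*z^2*(u*v^2 + u^2*v)"
    unfolding xp zp by (simp add: power2_eq_square algebra_simps)
  finally have a: "tt x z ^ p = x^2*z^2*(u*v^2 + u^2*v)" .
  have b: "tt x z = x^2*z^2*(u+v)"
    unfolding tt_def using xp zp by (simp add: power2_eq_square algebra_simps)
  have c: "x^(p-1) = u" "z^(p-1) = v" unfolding u_def v_def m by simp_all
  show ?thesis unfolding c by (subst a, subst b) (simp add: power2_eq_square algebra_simps)
qed

lemma zero_Xs: "0 \<in> Xs z"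
  unfolding Xs_def tt_def using p_ge3 by simp

lemma Xs_iff:
  assumes "x \<noteq> 0" "z \<noteq> 0"
  shows "x \<in> Xs z \<longleftrightarrow> x^(p-1) = - (z^(p-1)) \<or> x^(p-1) = - 1 / z^(p-1)"
proof -
  have v0: "z^(p-1) \<noteq> 0" using assms by simp
  have "x \<in> Xs z \<longleftrightarrow> (x^(p-1) + z^(p-1))*(1 + x^(p-1)*z^(p-1)) = 0"
    unfolding Xs_def Tr_tt using assms by simp
  also have "\<dots> \<longleftrightarrow> x^(p-1) = - (z^(p-1)) \<or> x^(p-1) = - 1 / z^(p-1)"
  proof -
    have e1: "x^(p-1) + z^(p-1) = 0 \<longleftrightarrow> x^(p-1) = - (z^(p-1))"
      by (simp add: eq_neg_iff_add_eq_0)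
    have "x^(p-1) = - 1 / z^(p-1) \<longleftrightarrow> x^(p-1) * z^(p-1) = - 1"
      using v0 by (auto simp: field_simps)
    also have "\<dots> \<longleftrightarrow> 1 + x^(p-1)*z^(p-1) = 0"
      by (metis add.commute eq_neg_iff_add_eq_0)
    finally have e2: "1 + x^(p-1)*z^(p-1) = 0 \<longleftrightarrow> x^(p-1) = - 1 / z^(p-1)" by simp
    show ?thesis using e1 e2 by simp
  qed
  finally show ?thesis .
qed

lemma unit_roots: "{l::'a. l^(p-1) = 1} = prime_subfield - {0}"
proof -
  obtain m where m: "p = Suc m" using p_ge3 by (cases p) auto
  have "m \<noteq> 0" using m p_ge3 by simp
  then have "l^m = 1 \<longleftrightarrow> l \<noteq> 0 \<and> l * l^m = l" for l :: 'a
    by (cases "l = 0") (auto simp: zero_power)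
  then show ?thesis using Fp_iff m by auto
qed

lemma pm1_set:
  assumes "a \<noteq> 0" "(x0::'a)^(p-1) = a"
  shows "{x. x^(p-1) = a} = (\<lambda>l. x0*l) ` (prime_subfield - {0})"
proof -
  have x0: "x0 \<noteq> 0" using assms p_ge3 by (cases "x0 = 0") auto
  have iff: "x^(p-1) = a \<longleftrightarrow> x/x0 \<in> prime_subfield - {0}" for x
  proof -
    have "x^(p-1) = a \<longleftrightarrow> (x/x0)^(p-1) = 1"
      using assms x0 by (simp add: power_divide)
    then show ?thesis using unit_roots by blast
  qed
  show ?thesis
  proof (rule Set.set_eqI)
    fix x show "x \<in> {x. x^(p-1) = a} \<longleftrightarrow> x \<in> (\<lambda>l. x0*l) ` (prime_subfield - {0})"
    proof
      assume "x \<in> {x. x^(p-1) = a}"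
      then have "x/x0 \<in> prime_subfield - {0}" using iff by simp
      then show "x \<in> (\<lambda>l. x0*l) ` (prime_subfield - {0})" by (rule rev_image_eqI) (use x0 in simp)
    next
      assume "x \<in> (\<lambda>l. x0*l) ` (prime_subfield - {0})"
      then obtain l where "l \<in> prime_subfield - {0}" "x = x0*l" by auto
      then show "x \<in> {x. x^(p-1) = a}" using iff x0 by simp
    qed
  qed
qed

lemma pm1_card:
  assumes "a \<noteq> 0" "(x0::'a)^(p-1) = a"
  shows "card {x. x^(p-1) = a} = p - 1"
proof -
  have x0: "x0 \<noteq> 0" using assms p_ge3 by (cases "x0 = 0") auto
  have "inj_on (\<lambda>l. x0*l) (prime_subfield - {0})" by (rule inj_onI) (use x0 in simp)
  then show ?thesis using pm1_set[OF assms] card_Fp zero_Fp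
    by (simp add: card_image card_Diff_singleton)
qed

lemma two_ne0: "(2::'a) \<noteq> 0"
proof
  assume "(2::'a) = 0"
  then have "of_nat 2 = (0::'a)" by simp
  then have "CHAR('a) dvd 2" using of_nat_eq_0_iff_char_dvd by blast
  then show False using charp p_ge3 by (auto dest: dvd_imp_le)
qed

lemma one_ne_m1: "(1::'a) \<noteq> -1"
  using two_ne0 by (metis one_add_one add_eq_0_iff2)


lemma im_K: "((y::'a)^p - y)^p + (y^p - y) = 0"
  using frob_diff pow_pp by simp

lemma zero_pm1: "(0::'a)^(p-1) = 0"
  using p_ge3 by simp

lemma Xs_decomp:
  assumes z: "z \<noteq> 0"
  shows "Xs z = insert 0 ({x. x^(p-1) = -(z^(p-1))} \<union> {x. x^(p-1) = -1/z^(p-1)})"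
proof (rule Set.set_eqI)
  fix x show "x \<in> Xs z \<longleftrightarrow> x \<in> insert 0 ({x. x^(p-1) = -(z^(p-1))} \<union> {x. x^(p-1) = -1/z^(p-1)})"
  proof (cases "x = 0")
    case True then show ?thesis using zero_Xs by simp
  next
    case False then show ?thesis using Xs_iff[OF False z] by simp
  qed
qed

lemma card_Xs:
  assumes z: "z \<noteq> 0"
  shows "card (Xs z) = (if z^(p-1) = 1 \<or> z^(p-1) = -1 then p else 2*p-1)"
proof -
  obtain w :: 'a where w: "w^(p-1) = -1" using w_ex by blast
  define v where "v = z^(p-1)"
  have v0: "v \<noteq> 0" unfolding v_def using z by simp
  define A where "A = {x::'a. x^(p-1) = -v}"
  define B where "B = {x::'a. x^(p-1) = -1/v}"
  have cA: "card A = p - 1" unfolding A_def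
    by (rule pm1_card[of _ "w*z"]) (use v0 w in \<open>simp_all add: v_def power_mult_distrib\<close>)
  have cB: "card B = p - 1" unfolding B_def
    by (rule pm1_card[of _ "w/z"]) (use v0 w in \<open>simp_all add: v_def power_divide\<close>)
  have fA: "finite A" "finite B" using fin by (auto intro: finite_subset)
  have n0: "0 \<notin> A \<union> B" unfolding A_def B_def using v0 p_ge3 by (auto simp: power_0_left)
  have X: "Xs z = insert 0 (A \<union> B)" unfolding A_def B_def v_def by (rule Xs_decomp[OF z])
  have cX: "card (Xs z) = Suc (card (A \<union> B))" unfolding X using n0 fA by simp
  show ?thesis
  proof (cases "v = 1 \<or> v = -1")
    case True
    then have "-1/v = -v" by auto
    then have "A \<union> B = A" unfolding A_def B_def by simp
    then show ?thesis using cX cA True p_ge3 unfolding v_def by simp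
  next
    case False
    have "A \<inter> B = {}"
    proof (rule ccontr)
      assume "A \<inter> B \<noteq> {}"
      then obtain x where "x^(p-1) = -v" "x^(p-1) = -1/v" unfolding A_def B_def by auto
      then have "-v = -1/v" by simp
      then have "v*v = 1" using v0 by (simp add: field_simps)
      then have "(v - 1)*(v + 1) = 0" by (simp add: algebra_simps)
      then have "v = 1 \<or> v = -1" by (simp add: eq_neg_iff_add_eq_0)
      then show False using False by simp
    qed
    then have "card (A \<union> B) = 2*(p-1)" using fA cA cB by (simp add: card_Un_disjoint)
    then show ?thesis using cX False p_ge3 unfolding v_def by simp
  qed
qed

lemma card_Xs_bounds:
  assumes "z \<noteq> 0"
  shows "p \<le> card (Xs z)" "card (Xs z) \<le> 2*p-1"
  using card_Xs[OF assms] p_ge3 by auto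

lemma card_Z1: "card {z::'a. z^(p-1) = 1 \<or> z^(p-1) = -1} = 2*(p-1)"
proof -
  obtain w :: 'a where w: "w^(p-1) = -1" using w_ex by blast
  have e: "{z::'a. z^(p-1) = 1 \<or> z^(p-1) = -1} = {z. z^(p-1) = 1} \<union> {z. z^(p-1) = -1}" by auto
  have c1: "card {z::'a. z^(p-1) = 1} = p - 1" by (rule pm1_card[of _ 1]) simp_all
  have c2: "card {z::'a. z^(p-1) = -1} = p - 1" by (rule pm1_card[of _ w]) (use w in simp_all)
  have d: "{z::'a. z^(p-1) = 1} \<inter> {z. z^(p-1) = -1} = {}" using one_ne_m1 by auto
  have f: "finite {z::'a. z^(p-1) = 1}" "finite {z::'a. z^(p-1) = -1}" using fin by (auto intro: finite_subset)
  show ?thesis unfolding e using c1 c2 d f by (simp add: card_Un_disjoint)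
qed

lemma Tset_eq: "(Tset p :: 'a pt set) =
   (\<lambda>(z,x,y). (x,y,z)) ` (SIGMA z:UNIV-{0}. SIGMA x:Xs z. {y. y^p - y = tt x z})"
proof (rule Set.set_eqI)
  fix P :: "'a pt"
  obtain x y z where P: "P = (x,y,z)" by (cases P) auto
  have "P \<in> Tset p \<longleftrightarrow> z \<noteq> 0 \<and> y^p - y = tt x z"
    unfolding P Tset_def using surf_iff by auto
  also have "\<dots> \<longleftrightarrow> z \<noteq> 0 \<and> x \<in> Xs z \<and> y^p - y = tt x z"
    unfolding Xs_def using im_K[of y] by auto
  also have "\<dots> \<longleftrightarrow> P \<in> (\<lambda>(z,x,y). (x,y,z)) ` (SIGMA z:UNIV-{0}. SIGMA x:Xs z. {y. y^p - y = tt x z})"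
    unfolding P by (auto simp: image_iff)
  finally show "P \<in> Tset p \<longleftrightarrow> P \<in> (\<lambda>(z,x,y). (x,y,z)) ` (SIGMA z:UNIV-{0}. SIGMA x:Xs z. {y. y^p - y = tt x z})" .
qed

lemma sols_card: "x \<in> Xs z \<Longrightarrow> card {y::'a. y^p - y = tt x z} = p"
  unfolding Xs_def using sol_exists sol_card by blast

lemma card_T: "card (Tset p :: 'a pt set) = 2*p^4 - 3*p^3 + 2*p^2 - p"
proof -
  define U0 where "U0 = (UNIV - {0::'a})"
  define Z1 where "Z1 = {z::'a. z^(p-1) = 1 \<or> z^(p-1) = -1}"
  have fU: "finite U0" unfolding U0_def using fin by simp
  have cU: "card U0 = p^2 - 1" unfolding U0_def using fin pcard by (simp add: card_Diff_singleton)
  have Zs: "Z1 \<subseteq> U0" unfolding Z1_def U0_def using p_ge3 one_ne_m1 by (auto simp: power_0_left)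
  have cZ: "card Z1 = 2*(p-1)" unfolding Z1_def by (rule card_Z1)
  have inj: "inj_on (\<lambda>(z,x,y). (x,y,z)) (SIGMA z:UNIV-{0::'a}. SIGMA x:Xs z. {y. y^p - y = tt x z})"
    by (rule inj_onI) auto
  have finS: "finite (SIGMA x:Xs z. {y::'a. y^p - y = tt x z})" for z
    using fin by (auto intro: finite_subset)
  have "card (Tset p :: 'a pt set) = card (SIGMA z:U0. SIGMA x:Xs z. {y. y^p - y = tt x z})"
    unfolding Tset_eq U0_def using inj by (simp add: card_image)
  also have "\<dots> = (\<Sum>z\<in>U0. card (SIGMA x:Xs z. {y. y^p - y = tt x z}))"
    by (rule card_SigmaI) (use fU finS in auto)
  also have "\<dots> = (\<Sum>z\<in>U0. p * card (Xs z))"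
  proof (rule sum.cong[OF refl])
    fix z assume "z \<in> U0"
    have fX: "finite (Xs z)" using fin by (auto intro: finite_subset)
    have "card (SIGMA x:Xs z. {y. y^p - y = tt x z}) = (\<Sum>x\<in>Xs z. card {y. y^p - y = tt x z})"
      by (rule card_SigmaI) (use fX in \<open>auto intro: finite_subset[OF subset_UNIV fin]\<close>)
    also have "\<dots> = (\<Sum>x\<in>Xs z. p)" by (rule sum.cong[OF refl]) (rule sols_card)
    finally show "card (SIGMA x:Xs z. {y. y^p - y = tt x z}) = p * card (Xs z)" by simp
  qed
  also have "\<dots> = p * (\<Sum>z\<in>U0. card (Xs z))" by (simp add: sum_distrib_left)
  also have "(\<Sum>z\<in>U0. card (Xs z)) = (\<Sum>z\<in>U0 - Z1. card (Xs z)) + (\<Sum>z\<in>Z1. card (Xs z))"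
    using Zs fU by (rule sum.subset_diff)
  also have "(\<Sum>z\<in>U0 - Z1. card (Xs z)) = (\<Sum>z\<in>U0 - Z1. 2*p-1)"
    by (rule sum.cong[OF refl]) (auto simp: U0_def Z1_def card_Xs)
  also have "(\<Sum>z\<in>Z1. card (Xs z)) = (\<Sum>z\<in>Z1. p)"
  proof (rule sum.cong[OF refl])
    fix z assume "z \<in> Z1"
    then have "z \<noteq> 0" "z^(p-1) = 1 \<or> z^(p-1) = -1" using Zs unfolding U0_def Z1_def by auto
    then show "card (Xs z) = p" using card_Xs by presburger
  qed
  also have "(\<Sum>z\<in>U0 - Z1. 2*p-1) + (\<Sum>z\<in>Z1. p) = (p^2-1-2*(p-1))*(2*p-1) + 2*(p-1)*p"
    using cU cZ Zs fU by (simp add: card_Diff_subset finite_subset)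
  also have "p * ((p^2-1-2*(p-1))*(2*p-1) + 2*(p-1)*p) = 2*p^4 - 3*p^3 + 2*p^2 - p"
    using arith1[OF p_ge3] by (simp add: algebra_simps)
  finally show ?thesis .
qed

lemma zslice_eq:
  assumes "c \<noteq> 0"
  shows "zslice (Tset p) c = (\<lambda>(x,y). (x,y,c)) ` (SIGMA x:Xs c. {y::'a. y^p - y = tt x c})"
proof (rule Set.set_eqI)
  fix P :: "'a pt"
  obtain x y z where P: "P = (x,y,z)" by (cases P) auto
  show "P \<in> zslice (Tset p) c \<longleftrightarrow> P \<in> (\<lambda>(x,y). (x,y,c)) ` (SIGMA x:Xs c. {y::'a. y^p - y = tt x c})"
    unfolding P zslice_def Tset_def using surf_iff assms im_K[of y] by (auto simp: image_iff Xs_def)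
qed

lemma card_zslice:
  assumes "c \<noteq> 0"
  shows "card (zslice (Tset p) c) = p * card (Xs c)"
proof -
  have inj: "inj_on (\<lambda>(x,y). (x,y,c)) (SIGMA x:Xs c. {y::'a. y^p - y = tt x c})"
    by (rule inj_onI) auto
  have fX: "finite (Xs c)" using fin by (auto intro: finite_subset)
  have "card (zslice (Tset p) c) = card (SIGMA x:Xs c. {y::'a. y^p - y = tt x c})"
    unfolding zslice_eq[OF assms] using inj by (simp add: card_image)
  also have "\<dots> = (\<Sum>x\<in>Xs c. card {y. y^p - y = tt x c})"
    by (rule card_SigmaI) (use fX in \<open>auto intro: finite_subset[OF subset_UNIV fin]\<close>)
  also have "\<dots> = (\<Sum>x\<in>Xs c. p)" by (rule sum.cong[OF refl]) (rule sols_card)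
  finally show ?thesis by simp
qed

lemma fiber_eq:
  assumes "(a,b,c) \<in> (Tset p :: 'a pt set)"
  shows "fiber a b c = (\<lambda>y. (a,y,c)) ` {y::'a. y^p - y = tt a c}"
proof -
  have "b^p - b = tt a c" using assms unfolding Tset_def using surf_iff by simp
  then have s: "{y::'a. y^p - y = tt a c} = (\<lambda>d. b + d) ` prime_subfield" by (rule sol_set)
  show ?thesis unfolding s fiber_def by auto
qed

lemma card_fiber:
  assumes "(a,b,c) \<in> (Tset p :: 'a pt set)"
  shows "card (fiber a b c) = p"
proof -
  have "b^p - b = tt a c" using assms unfolding Tset_def using surf_iff by simp
  then have "card {y::'a. y^p - y = tt a c} = p" by (rule sol_card)
  moreover have "inj_on (\<lambda>y. (a,y,c)) {y::'a. y^p - y = tt a c}" by (rule inj_onI) simp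
  ultimately show ?thesis unfolding fiber_eq[OF assms] by (simp add: card_image)
qed

end


lemma poly_nz_count:
  fixes a :: "nat \<Rightarrow> 'a::field"
  assumes S: "finite S" and j0: "j0 \<le> n" "a j0 \<noteq> 0"
  shows "card S - n \<le> card {x\<in>S. (\<Sum>j\<le>n. a j * x^j) \<noteq> 0}"
proof -
  define P where "P = (\<Sum>j\<le>n. monom (a j) j)"
  have ev: "poly P x = (\<Sum>j\<le>n. a j * x^j)" for x
    unfolding P_def by (simp add: poly_sum poly_monom)
  have "coeff P j0 = a j0" unfolding P_def using j0 by (simp add: coeff_sum)
  then have P0: "P \<noteq> 0" using j0 by auto
  have dP: "degree P \<le> n" unfolding P_def by (rule degree_sum_le) (auto intro: order_trans[OF degree_monom_le])
  have "{x\<in>S. (\<Sum>j\<le>n. a j * x^j) = 0} \<subseteq> {x. poly P x = 0}" using ev by auto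
  then have "card {x\<in>S. (\<Sum>j\<le>n. a j * x^j) = 0} \<le> card {x. poly P x = 0}"
    using poly_roots_finite[OF P0] by (rule card_mono[rotated])
  also have "\<dots> \<le> n" using card_poly_roots_bound[OF P0] dP by simp
  finally have z: "card {x\<in>S. (\<Sum>j\<le>n. a j * x^j) = 0} \<le> n" .
  have "S = {x\<in>S. (\<Sum>j\<le>n. a j * x^j) \<noteq> 0} \<union> {x\<in>S. (\<Sum>j\<le>n. a j * x^j) = 0}" by auto
  then have "card S = card {x\<in>S. (\<Sum>j\<le>n. a j * x^j) \<noteq> 0} + card {x\<in>S. (\<Sum>j\<le>n. a j * x^j) = 0}"
    using S by (metis (no_types, lifting) card_Un_disjoint disjoint_iff finite_Un mem_Collect_eq)
  then show ?thesis using z by linarith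
qed

definition Gf :: "nat \<Rightarrow> nat \<Rightarrow> nat \<Rightarrow> (nat \<Rightarrow> nat \<Rightarrow> nat \<Rightarrow> 'a::field) \<Rightarrow> 'a pt \<Rightarrow> 'a" where
  "Gf n1 n2 n3 c = (\<lambda>(x,y,z). \<Sum>i\<le>n1. \<Sum>j\<le>n2. \<Sum>k\<le>n3. c i j k * x^i * y^j * z^k)"

lemma Vspace_eq: "Vspace p r1 r2 = {g. \<exists>c. g = Gf (p-r1) (p-r2) (p^2-2*p) c}"
  unfolding Vspace_def Gf_def by simp

lemma Gf_y: "Gf n1 n2 n3 c (x,y,z) = (\<Sum>j\<le>n2. (\<Sum>i\<le>n1. (\<Sum>k\<le>n3. c i j k * z^k) * x^i) * y^j)"
proof -
  have "Gf n1 n2 n3 c (x,y,z) = (\<Sum>i\<le>n1. \<Sum>j\<le>n2. (\<Sum>k\<le>n3. c i j k * z^k) * x^i * y^j)"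
    unfolding Gf_def by (simp add: sum_distrib_left sum_distrib_right mult_ac)
  also have "\<dots> = (\<Sum>j\<le>n2. \<Sum>i\<le>n1. (\<Sum>k\<le>n3. c i j k * z^k) * x^i * y^j)"
    by (rule sum.swap)
  finally show ?thesis by (simp add: sum_distrib_right)
qed

lemma Gf_xy: "Gf n1 n2 n3 c (x,y,z) = (\<Sum>i\<le>n1. \<Sum>j\<le>n2. (\<Sum>k\<le>n3. c i j k * z^k) * (x^i * y^j))"
  unfolding Gf_def by (simp add: sum_distrib_left sum_distrib_right mult_ac)

lemma Gf_box: "Gf n1 n2 n3 c (x,y,z) =
   (\<Sum>b\<in>{..n1} \<times> {..n2} \<times> {..n3}. (case b of (i,j,k) \<Rightarrow> c i j k * (x^i * y^j * z^k)))"
  unfolding Gf_def by (simp add: sum.cartesian_product mult_ac)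


context ffp
begin

lemma finpt: "finite (UNIV :: 'a pt set)"
  using fin by (simp add: finite_Prod_UNIV)

abbreviation E :: "nat \<Rightarrow> (nat \<Rightarrow> nat \<Rightarrow> nat \<Rightarrow> 'a) \<Rightarrow> 'a \<Rightarrow> nat \<Rightarrow> nat \<Rightarrow> 'a" where
  "E n3 c z i j \<equiv> (\<Sum>k\<le>n3. c i j k * z^k)"

lemma slice_weight:
  fixes c :: "nat \<Rightarrow> nat \<Rightarrow> nat \<Rightarrow> 'a"
  assumes z0: "z0 \<noteq> 0" and r1: "r1 \<le> p" and r2: "r2 \<le> p"
    and i0: "i0 \<le> p - r1" and j0: "j0 \<le> p - r2" and nz: "E n3 c z0 i0 j0 \<noteq> 0"
  shows "r1 * r2 \<le> card {P \<in> zslice (Tset p) z0. Gf (p-r1) (p-r2) n3 c P \<noteq> 0}"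
proof -
  define n1 where "n1 = p - r1"
  define n2 where "n2 = p - r2"
  define H where "H x j = (\<Sum>i\<le>n1. E n3 c z0 i j * x^i)" for x j
  define X' where "X' = {x\<in>Xs z0. H x j0 \<noteq> 0}"
  define Y' where "Y' x = {y\<in>{y::'a. y^p - y = tt x z0}. (\<Sum>j\<le>n2. H x j * y^j) \<noteq> 0}" for x
  have fX: "finite (Xs z0)" using fin by (auto intro: finite_subset)
  have "card (Xs z0) - n1 \<le> card X'"
    unfolding X'_def H_def using poly_nz_count[OF fX, of i0 n1 "\<lambda>i. E n3 c z0 i j0"] i0 nz n1_def by simp
  then have cX': "r1 \<le> card X'" using card_Xs_bounds(1)[OF z0] r1 unfolding n1_def by linarith
  have cY': "r2 \<le> card (Y' x)" if x: "x \<in> X'" for x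
  proof -
    have xX: "x \<in> Xs z0" and hx: "H x j0 \<noteq> 0" using x unfolding X'_def by auto
    have fY: "finite {y::'a. y^p - y = tt x z0}" using fin by (auto intro: finite_subset)
    have "card {y::'a. y^p - y = tt x z0} - n2 \<le> card (Y' x)"
      unfolding Y'_def using poly_nz_count[OF fY, of j0 n2 "H x"] j0 hx n2_def by simp
    then show ?thesis using sols_card[OF xX] r2 unfolding n2_def by linarith
  qed
  have sub: "(\<lambda>(x,y). (x,y,z0)) ` (SIGMA x:X'. Y' x) \<subseteq> {P \<in> zslice (Tset p) z0. Gf n1 n2 n3 c P \<noteq> 0}"
  proof
    fix P assume "P \<in> (\<lambda>(x,y). (x,y,z0)) ` (SIGMA x:X'. Y' x)"
    then obtain x y where P: "P = (x,y,z0)" and x: "x \<in> X'" and y: "y \<in> Y' x" by auto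
    have "P \<in> zslice (Tset p) z0" unfolding zslice_eq[OF z0] P using x y unfolding X'_def Y'_def by auto
    moreover have "Gf n1 n2 n3 c P \<noteq> 0" unfolding P Gf_y using y unfolding Y'_def H_def by simp
    ultimately show "P \<in> {P \<in> zslice (Tset p) z0. Gf n1 n2 n3 c P \<noteq> 0}" by simp
  qed
  have inj: "inj_on (\<lambda>(x,y). (x,y,z0)) (SIGMA x:X'. Y' x)" by (rule inj_onI) auto
  have fX': "finite X'" unfolding X'_def using fX by simp
  have fY': "finite (Y' x)" for x using fin by (auto intro: finite_subset)
  have "r1 * r2 \<le> card X' * r2" using cX' by simp
  also have "\<dots> = (\<Sum>x\<in>X'. r2)" by simp
  also have "\<dots> \<le> (\<Sum>x\<in>X'. card (Y' x))" by (rule sum_mono) (rule cY')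
  also have "\<dots> = card (SIGMA x:X'. Y' x)" by (rule card_SigmaI[symmetric]) (use fX' fY' in auto)
  also have "\<dots> = card ((\<lambda>(x,y). (x,y,z0)) ` (SIGMA x:X'. Y' x))" using inj by (simp add: card_image)
  also have "\<dots> \<le> card {P \<in> zslice (Tset p) z0. Gf n1 n2 n3 c P \<noteq> 0}"
    by (rule card_mono[OF _ sub]) (rule finite_subset[OF subset_UNIV finpt])
  finally show ?thesis unfolding n1_def n2_def .
qed

lemma full_weight:
  fixes c :: "nat \<Rightarrow> nat \<Rightarrow> nat \<Rightarrow> 'a"
  assumes r1: "r1 \<le> p" and r2: "r2 \<le> p"
    and i0: "i0 \<le> p - r1" and j0: "j0 \<le> p - r2" and k0: "k0 \<le> p^2 - 2*p" and nz: "c i0 j0 k0 \<noteq> 0"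
  shows "(2*p-1) * (r1 * r2) \<le> card {P \<in> Tset p. Gf (p-r1) (p-r2) (p^2-2*p) c P \<noteq> 0}"
proof -
  define n3 where "n3 = p^2 - 2*p"
  define G where "G = Gf (p-r1) (p-r2) n3 c"
  define U0 where "U0 = (UNIV - {0::'a})"
  define Z' where "Z' = {z\<in>U0. E n3 c z i0 j0 \<noteq> 0}"
  have fU: "finite U0" unfolding U0_def using fin by simp
  have cU: "card U0 = p^2 - 1" unfolding U0_def using fin pcard by (simp add: card_Diff_singleton)
  have "card U0 - n3 \<le> card Z'"
    unfolding Z'_def using poly_nz_count[OF fU, of k0 n3 "\<lambda>k. c i0 j0 k"] k0 nz n3_def by (simp add: mult.commute)
  moreover have "card U0 - n3 = 2*p - 1"
  proof -
    have "2*p \<le> p^2" using p_ge3 by (simp add: power2_eq_square)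
    then show ?thesis unfolding cU n3_def by simp
  qed
  ultimately have cZ: "2*p-1 \<le> card Z'" by simp
  have fZ: "finite Z'" unfolding Z'_def using fU by simp
  define W where "W z = {P \<in> zslice (Tset p) z. G P \<noteq> 0}" for z
  have cW: "r1 * r2 \<le> card (W z)" if z: "z \<in> Z'" for z
    unfolding W_def G_def by (rule slice_weight) (use z r1 r2 i0 j0 in \<open>auto simp: Z'_def U0_def\<close>)
  have fW: "finite (W z)" for z by (rule finite_subset[OF subset_UNIV finpt])
  have dW: "W z1 \<inter> W z2 = {}" if "z1 \<noteq> z2" for z1 z2 using that unfolding W_def zslice_def by auto
  have sub: "(\<Union>z\<in>Z'. W z) \<subseteq> {P \<in> Tset p. G P \<noteq> 0}" unfolding W_def zslice_def by auto
  have "(2*p-1) * (r1 * r2) \<le> card Z' * (r1 * r2)" using cZ by simp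
  also have "\<dots> = (\<Sum>z\<in>Z'. r1 * r2)" by simp
  also have "\<dots> \<le> (\<Sum>z\<in>Z'. card (W z))" by (rule sum_mono) (rule cW)
  also have "\<dots> = card (\<Union>z\<in>Z'. W z)" by (rule card_UN_disjoint[symmetric]) (use fZ fW dW in auto)
  also have "\<dots> \<le> card {P \<in> Tset p. G P \<noteq> 0}"
    by (rule card_mono[OF _ sub]) (rule finite_subset[OF subset_UNIV finpt])
  finally show ?thesis unfolding G_def n3_def .
qed

end



interpretation fv: vector_space "\<lambda>(c::'a::field) (f::'b \<Rightarrow> 'a) x. c * f x"
  by unfold_locales (auto simp: algebra_simps fun_eq_iff)

lemma code_dim_fv: "code_dim C = fv.dim C"
  unfolding code_dim_def by simp

lemma arith2:
  fixes p r1 r2 :: nat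
  assumes "3 \<le> p" "2 \<le> r1" "2 \<le> r2"
  shows "(r1 + r2 - 3) * p + (r1 + r2) \<le> (2*p-1) * (r1 * r2)"
proof -
  obtain a where a: "r1 = a + 2" using assms by (metis add.commute le_Suc_ex)
  obtain b where b: "r2 = b + 2" using assms by (metis add.commute le_Suc_ex)
  obtain q where q: "p = q + 3" using assms by (metis add.commute le_Suc_ex)
  have e: "r1 + r2 - 3 = a + b + 1" "2*p - 1 = 2*q + 5" unfolding a b q by simp_all
  show ?thesis unfolding e unfolding a b q by (simp add: algebra_simps)
qed

lemma Gf_nz_coeff:
  assumes "Gf n1 n2 n3 c P \<noteq> 0"
  shows "\<exists>i\<le>n1. \<exists>j\<le>n2. \<exists>k\<le>n3. c i j k \<noteq> 0"
proof (rule ccontr)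
  assume "\<not> ?thesis"
  then have "\<forall>i\<le>n1. \<forall>j\<le>n2. \<forall>k\<le>n3. c i j k = 0" by blast
  then have "Gf n1 n2 n3 c P = 0" unfolding Gf_def by (cases P) simp
  then show False using assms by simp
qed

lemma Gf_nz_E:
  assumes "Gf n1 n2 n3 c (x,y,z) \<noteq> 0"
  shows "\<exists>i\<le>n1. \<exists>j\<le>n2. (\<Sum>k\<le>n3. c i j k * z^k) \<noteq> 0"
proof (rule ccontr)
  assume "\<not> ?thesis"
  then have "\<forall>i\<le>n1. \<forall>j\<le>n2. (\<Sum>k\<le>n3. c i j k * z^k) = 0" by blast
  then have "Gf n1 n2 n3 c (x,y,z) = 0" unfolding Gf_xy by simp
  then show False using assms by simp
qed

lemma Gf_nz_H:
  assumes "Gf n1 n2 n3 c (x,y,z) \<noteq> 0"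
  shows "\<exists>j\<le>n2. (\<Sum>i\<le>n1. (\<Sum>k\<le>n3. c i j k * z^k) * x^i) \<noteq> 0"
proof (rule ccontr)
  assume "\<not> ?thesis"
  then have "\<forall>j\<le>n2. (\<Sum>i\<le>n1. (\<Sum>k\<le>n3. c i j k * z^k) * x^i) = 0" by blast
  then have "Gf n1 n2 n3 c (x,y,z) = 0" unfolding Gf_y by simp
  then show False using assms by simp
qed

definition monval :: "nat \<times> nat \<times> nat \<Rightarrow> ('a::field) pt \<Rightarrow> 'a" where
  "monval b P = (case b of (i,j,k) \<Rightarrow> case P of (x,y,z) \<Rightarrow> x^i*y^j*z^k)"

definition cof :: "(nat \<Rightarrow> nat \<Rightarrow> nat \<Rightarrow> 'a) \<Rightarrow> nat \<times> nat \<times> nat \<Rightarrow> 'a" where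
  "cof c b = (case b of (i,j,k) \<Rightarrow> c i j k)"

lemma Gf_mon: "Gf n1 n2 n3 c P = (\<Sum>b\<in>{..n1} \<times> {..n2} \<times> {..n3}. cof c b * monval b P)"
proof -
  obtain x y z where P: "P = (x,y,z)" by (cases P) auto
  show ?thesis unfolding P Gf_box
    by (rule sum.cong[OF refl]) (auto simp: cof_def monval_def split: prod.split)
qed

lemma cof_uncurry: "cof (\<lambda>i j k. u (i,j,k)) = u"
  unfolding cof_def by (auto simp: fun_eq_iff split: prod.split)



context ffp
begin

lemma C_form: "f \<in> evcode (Vspace p r1 r2) (Tset p :: 'a pt set) \<longleftrightarrow>
   (\<exists>c. f = (\<lambda>P. if P \<in> Tset p then Gf (p-r1) (p-r2) (p^2-2*p) c P else 0))"
  unfolding evcode_def Vspace_eq by auto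

lemma punct_form:
  assumes S: "S \<subseteq> (Tset p :: 'a pt set)"
    and f: "f \<in> puncture (evcode (Vspace p r1 r2) (Tset p :: 'a pt set)) S"
  shows "\<exists>c. f = (\<lambda>P. if P \<in> S then Gf (p-r1) (p-r2) (p^2-2*p) c P else 0)"
proof -
  obtain g where g: "g \<in> evcode (Vspace p r1 r2) (Tset p :: 'a pt set)" and fg: "f = (\<lambda>P. if P \<in> S then g P else 0)"
    using f unfolding puncture_def by auto
  obtain c where c: "g = (\<lambda>P. if P \<in> Tset p then Gf (p-r1) (p-r2) (p^2-2*p) c P else 0)"
    using g C_form by blast
  show ?thesis using S by (intro exI[of _ c]) (auto simp: fg c fun_eq_iff)
qed

lemma fiber_sub:
  assumes "(a,b,cz) \<in> (Tset p :: 'a pt set)"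
  shows "fiber a b cz \<subseteq> zslice (Tset p) cz"
proof -
  have cz: "cz \<noteq> 0" using assms unfolding Tset_def by simp
  show ?thesis unfolding fiber_eq[OF assms] zslice_def Tset_def using cz surf_iff by auto
qed

lemma lower_dim:
  assumes T: "(a,b,cz) \<in> (Tset p :: 'a pt set)"
  shows "fv.dim (puncture (evcode (Vspace p r1 r2) (Tset p :: 'a pt set)) (fiber a b cz)) \<le> p - r2 + 1"
proof -
  define F where "F = fiber a b cz"
  define WW where "WW j = (\<lambda>P. if P \<in> F then fst (snd P)^j else (0::'a))" for j
  define W where "W = WW ` {..p-r2}"
  have FT: "F \<subseteq> Tset p" unfolding F_def using fiber_sub[OF T] unfolding zslice_def by auto
  have sub: "puncture (evcode (Vspace p r1 r2) (Tset p)) F \<subseteq> fv.span W"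
  proof
    fix f assume "f \<in> puncture (evcode (Vspace p r1 r2) (Tset p)) F"
    then obtain c where f: "f = (\<lambda>P. if P \<in> F then Gf (p-r1) (p-r2) (p^2-2*p) c P else 0)"
      using punct_form[OF FT] by blast
    define H where "H j = (\<Sum>i\<le>p-r1. (\<Sum>k\<le>p^2-2*p. c i j k * cz^k) * a^i)" for j
    have fe: "f = (\<Sum>j\<le>p-r2. (\<lambda>x. H j * WW j x))"
    proof (rule ext)
      fix P
      show "f P = (\<Sum>j\<le>p-r2. (\<lambda>x. H j * WW j x)) P"
      proof (cases "P \<in> F")
        case True
        then obtain y where P: "P = (a,y,cz)" unfolding F_def fiber_eq[OF T] by auto
        show ?thesis unfolding sum_fun_apply using True unfolding f WW_def P H_def Gf_y by simp
      next
        case False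
        then show ?thesis unfolding sum_fun_apply f WW_def by simp
      qed
    qed
    have "(\<lambda>x. H j * WW j x) \<in> fv.span W" if "j \<le> p - r2" for j
    proof -
      have "WW j \<in> fv.span W" using that unfolding W_def by (intro fv.span_base) auto
      from fv.span_scale[OF this, of "H j"] show ?thesis by simp
    qed
    then show "f \<in> fv.span W" unfolding fe by (intro fv.span_sum) auto
  qed
  have "fv.dim (puncture (evcode (Vspace p r1 r2) (Tset p)) F) \<le> card W"
    by (rule fv.dim_le_card[OF sub]) (simp add: W_def)
  also have "\<dots> \<le> card {..p-r2}" unfolding W_def by (rule card_image_le) simp
  finally show ?thesis unfolding F_def by simp
qed


lemma lower_wt:
  assumes T: "(a,b,cz) \<in> (Tset p :: 'a pt set)" and r2: "r2 \<le> p"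
    and f: "f \<in> puncture (evcode (Vspace p r1 r2) (Tset p :: 'a pt set)) (fiber a b cz)" and f0: "f \<noteq> 0"
  shows "r2 \<le> weight (fiber a b cz) f"
proof -
  define F where "F = fiber a b cz"
  have FT: "F \<subseteq> Tset p" unfolding F_def using fiber_sub[OF T] unfolding zslice_def by auto
  obtain c where fc: "f = (\<lambda>P. if P \<in> F then Gf (p-r1) (p-r2) (p^2-2*p) c P else 0)"
    using punct_form[OF FT] f unfolding F_def by blast
  obtain P where "f P \<noteq> 0" using f0 by (auto simp: fun_eq_iff)
  then have PF: "P \<in> F" and GP: "Gf (p-r1) (p-r2) (p^2-2*p) c P \<noteq> 0" unfolding fc by (auto split: if_splits)
  then obtain y0 where P: "P = (a,y0,cz)" unfolding F_def fiber_eq[OF T] by auto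
  define H where "H j = (\<Sum>i\<le>p-r1. (\<Sum>k\<le>p^2-2*p. c i j k * cz^k) * a^i)" for j
  obtain j0 where j0: "j0 \<le> p - r2" "H j0 \<noteq> 0" using Gf_nz_H[OF GP[unfolded P]] unfolding H_def by blast
  define Ys where "Ys = {y::'a. y^p - y = tt a cz}"
  define Y' where "Y' = {y\<in>Ys. (\<Sum>j\<le>p-r2. H j * y^j) \<noteq> 0}"
  have bsol: "b^p - b = tt a cz" using T unfolding Tset_def using surf_iff by simp
  have cY: "card Ys = p" unfolding Ys_def using sol_card[OF bsol] .
  have fY: "finite Ys" using fin by (auto intro: finite_subset)
  have "card Ys - (p - r2) \<le> card Y'"
    unfolding Y'_def using poly_nz_count[OF fY, of j0 "p-r2" H] j0 by simp
  then have c1: "r2 \<le> card Y'" using cY r2 by simp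
  have sub: "(\<lambda>y. (a,y,cz)) ` Y' \<subseteq> {P \<in> F. f P \<noteq> 0}"
  proof
    fix Q assume "Q \<in> (\<lambda>y. (a,y,cz)) ` Y'"
    then obtain y where Q: "Q = (a,y,cz)" and y: "y \<in> Y'" by auto
    have QF: "Q \<in> F" unfolding F_def fiber_eq[OF T] Q using y unfolding Y'_def Ys_def by auto
    have "Gf (p-r1) (p-r2) (p^2-2*p) c Q \<noteq> 0" unfolding Q Gf_y using y unfolding Y'_def H_def by simp
    then show "Q \<in> {P \<in> F. f P \<noteq> 0}" using QF unfolding fc by simp
  qed
  have inj: "inj_on (\<lambda>y. (a,y,cz)) Y'" by (rule inj_onI) simp
  have "card Y' \<le> card {P \<in> F. f P \<noteq> 0}"
    using card_mono[OF finite_subset[OF subset_UNIV finpt] sub] inj by (simp add: card_image)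
  then show ?thesis using c1 unfolding weight_def F_def by simp
qed

lemma middle_dim:
  assumes cz: "cz \<noteq> 0"
  shows "fv.dim (puncture (evcode (Vspace p r1 r2) (Tset p :: 'a pt set)) (zslice (Tset p) cz))
         \<le> (p - r2 + 1) * (p - r1 + 1)"
proof -
  define S where "S = zslice (Tset p :: 'a pt set) cz"
  define WW where "WW b = (\<lambda>P. if P \<in> S then fst P ^ fst b * fst (snd P) ^ snd b else (0::'a))" for b
  define W where "W = WW ` ({..p-r1} \<times> {..p-r2})"
  have ST: "S \<subseteq> Tset p" unfolding S_def zslice_def by auto
  have sub: "puncture (evcode (Vspace p r1 r2) (Tset p)) S \<subseteq> fv.span W"
  proof
    fix f assume "f \<in> puncture (evcode (Vspace p r1 r2) (Tset p)) S"
    then obtain c where f: "f = (\<lambda>P. if P \<in> S then Gf (p-r1) (p-r2) (p^2-2*p) c P else 0)"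
      using punct_form[OF ST] by blast
    define H where "H i j = (\<Sum>k\<le>p^2-2*p. c i j k * cz^k)" for i j
    have fe: "f = (\<Sum>i\<le>p-r1. \<Sum>j\<le>p-r2. (\<lambda>x. H i j * WW (i,j) x))"
    proof (rule ext)
      fix P
      show "f P = (\<Sum>i\<le>p-r1. \<Sum>j\<le>p-r2. (\<lambda>x. H i j * WW (i,j) x)) P"
      proof (cases "P \<in> S")
        case True
        then obtain x y where P: "P = (x,y,cz)" unfolding S_def zslice_def by (cases P) auto
        show ?thesis unfolding sum_fun_apply using True unfolding f WW_def P H_def Gf_xy by simp
      next
        case False
        then show ?thesis unfolding sum_fun_apply f WW_def by simp
      qed
    qed
    have sp: "(\<lambda>x. H i j * WW (i,j) x) \<in> fv.span W" if "i \<le> p - r1" "j \<le> p - r2" for i j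
    proof -
      have "WW (i,j) \<in> fv.span W" using that unfolding W_def by (intro fv.span_base) auto
      from fv.span_scale[OF this, of "H i j"] show ?thesis by simp
    qed
    show "f \<in> fv.span W" unfolding fe by (intro fv.span_sum sp) auto
  qed
  have "fv.dim (puncture (evcode (Vspace p r1 r2) (Tset p)) S) \<le> card W"
    by (rule fv.dim_le_card[OF sub]) (simp add: W_def)
  also have "\<dots> \<le> card ({..p-r1} \<times> {..p-r2})" unfolding W_def by (rule card_image_le) simp
  also have "\<dots> = (p - r2 + 1) * (p - r1 + 1)" by (simp add: card_cartesian_product)
  finally show ?thesis unfolding S_def .
qed

lemma middle_wt:
  assumes cz: "cz \<noteq> 0" and r1: "r1 \<le> p" and r2: "r2 \<le> p"
    and f: "f \<in> puncture (evcode (Vspace p r1 r2) (Tset p :: 'a pt set)) (zslice (Tset p) cz)" and f0: "f \<noteq> 0"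
  shows "r1 * r2 \<le> weight (zslice (Tset p) cz) f"
proof -
  define S where "S = zslice (Tset p :: 'a pt set) cz"
  have ST: "S \<subseteq> Tset p" unfolding S_def zslice_def by auto
  obtain c where fc: "f = (\<lambda>P. if P \<in> S then Gf (p-r1) (p-r2) (p^2-2*p) c P else 0)"
    using punct_form[OF ST] f unfolding S_def by blast
  obtain P where "f P \<noteq> 0" using f0 by (auto simp: fun_eq_iff)
  then have PS: "P \<in> S" and GP: "Gf (p-r1) (p-r2) (p^2-2*p) c P \<noteq> 0" unfolding fc by (auto split: if_splits)
  then obtain x y where P: "P = (x,y,cz)" unfolding S_def zslice_def by (cases P) auto
  obtain i0 j0 where ij: "i0 \<le> p - r1" "j0 \<le> p - r2" "(\<Sum>k\<le>p^2-2*p. c i0 j0 k * cz^k) \<noteq> 0"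
    using Gf_nz_E[OF GP[unfolded P]] by blast
  have "r1 * r2 \<le> card {P \<in> S. Gf (p-r1) (p-r2) (p^2-2*p) c P \<noteq> 0}"
    unfolding S_def by (rule slice_weight[of cz r1 r2 i0 j0 c "p^2-2*p", OF cz r1 r2 ij])
  also have "{P \<in> S. Gf (p-r1) (p-r2) (p^2-2*p) c P \<noteq> 0} = {P \<in> S. f P \<noteq> 0}" unfolding fc by auto
  finally show ?thesis unfolding weight_def S_def .
qed

lemma full_wt:
  assumes r1: "2 \<le> r1" "r1 \<le> p" and r2: "2 \<le> r2" "r2 \<le> p"
    and f: "f \<in> evcode (Vspace p r1 r2) (Tset p :: 'a pt set)" and f0: "f \<noteq> 0"
  shows "(r1 + r2 - 3) * p + (r1 + r2) \<le> weight (Tset p) f"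
proof -
  obtain c where fc: "f = (\<lambda>P. if P \<in> Tset p then Gf (p-r1) (p-r2) (p^2-2*p) c P else 0)"
    using f C_form by blast
  obtain P where "f P \<noteq> 0" using f0 by (auto simp: fun_eq_iff)
  then have GP: "Gf (p-r1) (p-r2) (p^2-2*p) c P \<noteq> 0" unfolding fc by (auto split: if_splits)
  obtain i0 j0 k0 where ijk: "i0 \<le> p - r1" "j0 \<le> p - r2" "k0 \<le> p^2 - 2*p" "c i0 j0 k0 \<noteq> 0"
    using Gf_nz_coeff[OF GP] by blast
  have "(r1 + r2 - 3) * p + (r1 + r2) \<le> (2*p-1) * (r1 * r2)" using arith2 p_ge3 r1 r2 by simp
  also have "\<dots> \<le> card {P \<in> Tset p. Gf (p-r1) (p-r2) (p^2-2*p) c P \<noteq> 0}"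
    by (rule full_weight[of r1 r2 i0 j0 k0 c, OF r1(2) r2(2) ijk])
  also have "{P \<in> Tset p. Gf (p-r1) (p-r2) (p^2-2*p) c P \<noteq> 0} = {P \<in> Tset p. f P \<noteq> 0}" unfolding fc by auto
  finally show ?thesis unfolding weight_def .
qed


lemma full_dim:
  assumes r1: "2 \<le> r1" "r1 \<le> p" and r2: "2 \<le> r2" "r2 \<le> p"
  shows "fv.dim (evcode (Vspace p r1 r2) (Tset p :: 'a pt set)) = (p - r2 + 1) * (p - r1 + 1) * (p^2 - 2*p + 1)"
proof -
  define n1 where "n1 = p - r1"
  define n2 where "n2 = p - r2"
  define n3 where "n3 = p^2 - 2*p"
  define box where "box = {..n1} \<times> {..n2} \<times> {..n3}"
  define T where "T = (Tset p :: 'a pt set)"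
  define C where "C = evcode (Vspace p r1 r2) T"
  define mon where "mon b = (\<lambda>P. if P \<in> T then monval b P else (0::'a))" for b
  have fbox: "finite box" unfolding box_def by simp
  have Cf: "f \<in> C \<longleftrightarrow> (\<exists>c. f = (\<lambda>P. if P \<in> T then Gf n1 n2 n3 c P else 0))" for f
    unfolding C_def T_def n1_def n2_def n3_def by (rule C_form)
  have zero: "cof c b = 0" if z: "\<forall>P\<in>T. Gf n1 n2 n3 c P = 0" and b: "b \<in> box" for c b
  proof (rule ccontr)
    assume nz: "cof c b \<noteq> 0"
    obtain i j k where bijk: "b = (i,j,k)" by (cases b) auto
    have "(2*p-1) * (r1 * r2) \<le> card {P \<in> Tset p. Gf (p-r1) (p-r2) (p^2-2*p) c P \<noteq> 0}"
      by (rule full_weight[of r1 r2 i j k c]) (use r1 r2 b nz in \<open>auto simp: bijk box_def n1_def n2_def n3_def cof_def\<close>)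
    also have "{P \<in> Tset p. Gf (p-r1) (p-r2) (p^2-2*p) c P \<noteq> 0} = {}"
      using z unfolding T_def n1_def n2_def n3_def by auto
    finally have "(2*p-1) * (r1 * r2) \<le> 0" by simp
    moreover have "0 < (2*p-1) * (r1 * r2)" using p_ge3 r1 r2 by simp
    ultimately show False by simp
  qed
  have Gu: "Gf n1 n2 n3 (\<lambda>i j k. u (i,j,k)) P = (\<Sum>b\<in>box. u b * monval b P)" for u P
    unfolding Gf_mon cof_uncurry box_def ..
  have monC: "mon b0 \<in> C" if b0: "b0 \<in> box" for b0
  proof -
    define u where "u b = (if b = b0 then 1 else (0::'a))" for b
    have g: "Gf n1 n2 n3 (\<lambda>i j k. u (i,j,k)) P = monval b0 P" for P
    proof -
      have m: "(if b = b0 then 1 else (0::'a)) * m = (if b = b0 then m else 0)" for b m by simp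
      show ?thesis unfolding Gu unfolding u_def m using b0 fbox by (simp add: sum.delta')
    qed
    have "mon b0 = (\<lambda>P. if P \<in> T then Gf n1 n2 n3 (\<lambda>i j k. u (i,j,k)) P else 0)"
      unfolding mon_def g ..
    then show ?thesis unfolding Cf by blast
  qed
  have Csub: "C \<subseteq> fv.span (mon ` box)"
  proof
    fix f assume "f \<in> C"
    then obtain c where fc: "f = (\<lambda>P. if P \<in> T then Gf n1 n2 n3 c P else 0)" unfolding Cf by blast
    have fe: "f = (\<Sum>b\<in>box. (\<lambda>x. cof c b * mon b x))"
      by (rule ext) (simp add: sum_fun_apply fc mon_def Gf_mon box_def)
    have sp: "(\<lambda>x. cof c b * mon b x) \<in> fv.span (mon ` box)" if "b \<in> box" for b
    proof -
      have "mon b \<in> fv.span (mon ` box)" using that by (intro fv.span_base) auto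
      from fv.span_scale[OF this, of "cof c b"] show ?thesis by simp
    qed
    show "f \<in> fv.span (mon ` box)" unfolding fe by (intro fv.span_sum sp)
  qed
  have inj: "inj_on mon box"
  proof (rule inj_onI, rule ccontr)
    fix b1 b2 assume b1: "b1 \<in> box" and b2: "b2 \<in> box" and eq: "mon b1 = mon b2" and ne: "b1 \<noteq> b2"
    define u where "u b = (if b = b1 then 1 else (0::'a)) - (if b = b2 then 1 else 0)" for b
    have "\<forall>P\<in>T. Gf n1 n2 n3 (\<lambda>i j k. u (i,j,k)) P = 0"
    proof
      fix P assume PT: "P \<in> T"
      have "Gf n1 n2 n3 (\<lambda>i j k. u (i,j,k)) P = monval b1 P - monval b2 P"
      proof -
        have m: "(if b = b' then 1 else (0::'a)) * m = (if b = b' then m else 0)" for b b' m by simp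
        show ?thesis unfolding Gu unfolding u_def left_diff_distrib sum_subtractf m using b1 b2 fbox by (simp add: sum.delta')
      qed
      also have "\<dots> = 0" using fun_cong[OF eq, of P] PT unfolding mon_def by simp
      finally show "Gf n1 n2 n3 (\<lambda>i j k. u (i,j,k)) P = 0" .
    qed
    then have "cof (\<lambda>i j k. u (i,j,k)) b1 = 0" using b1 by (rule zero)
    then have "u b1 = 0" unfolding cof_uncurry .
    then show False using ne by (simp add: u_def)
  qed
  have indep: "\<not> fv.dependent (mon ` box)"
  proof
    assume "fv.dependent (mon ` box)"
    then obtain u where u1: "\<exists>v\<in>mon ` box. u v \<noteq> 0" and u2: "(\<Sum>v\<in>mon ` box. (\<lambda>x. u v * v x)) = 0"
      using fv.dependent_finite[of "mon ` box"] fbox by auto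
    have u3: "(\<Sum>b\<in>box. (\<lambda>x. u (mon b) * mon b x)) = 0"
      using u2 by (simp add: sum.reindex[OF inj])
    have "\<forall>P\<in>T. Gf n1 n2 n3 (\<lambda>i j k. u (mon (i,j,k))) P = 0"
    proof
      fix P assume PT: "P \<in> T"
      have "Gf n1 n2 n3 (\<lambda>i j k. u (mon (i,j,k))) P = (\<Sum>b\<in>box. u (mon b) * mon b P)"
        using Gu[of "\<lambda>b. u (mon b)" P] PT unfolding mon_def by simp
      also have "\<dots> = 0" using fun_cong[OF u3, of P] by (simp add: sum_fun_apply)
      finally show "Gf n1 n2 n3 (\<lambda>i j k. u (mon (i,j,k))) P = 0" .
    qed
    then have "cof (\<lambda>i j k. u (mon (i,j,k))) b = 0" if "b \<in> box" for b using that by (rule zero)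
    then have "u (mon b) = 0" if "b \<in> box" for b using that cof_uncurry[of "\<lambda>b. u (mon b)"] by simp
    then show False using u1 by auto
  qed
  have "card (mon ` box) = fv.dim C"
    by (rule fv.basis_card_eq_dim) (use monC Csub indep in auto)
  moreover have "card (mon ` box) = card box" using inj by (simp add: card_image)
  moreover have "card box = Suc n1 * (Suc n2 * Suc n3)"
    unfolding box_def by (simp add: card_cartesian_product)
  moreover have "Suc n1 * (Suc n2 * Suc n3) = (p - r2 + 1) * (p - r1 + 1) * (p^2 - 2*p + 1)"
    unfolding n1_def n2_def n3_def by (simp only: Suc_eq_plus1 mult_ac)
  ultimately show ?thesis unfolding C_def T_def by simp
qed

end

theorem theorem4p4:
  fixes p r1 r2 :: nat
  assumes "prime p" and "odd p" and "card (UNIV :: ('a::field) set) = p^2"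
    and "2 \<le> r1" and "r1 \<le> p" and "2 \<le> r2" and "r2 \<le> p"
  defines "T \<equiv> (Tset p :: ('a::field) pt set)"
  defines "C \<equiv> evcode (Vspace p r1 r2) T"
  shows "(\<forall>a b c. (a,b,c) \<in> T \<longrightarrow>
            fiber a b c \<subseteq> zslice T c \<and> zslice T c \<subseteq> T
          \<and> card (fiber a b c) = p
          \<and> code_dim (puncture C (fiber a b c)) \<le> p - r2 + 1
          \<and> (\<forall>f \<in> puncture C (fiber a b c). f \<noteq> 0 \<longrightarrow> r2 \<le> weight (fiber a b c) f)
          \<and> card (zslice T c) \<le> 2*p^2 - p
          \<and> code_dim (puncture C (zslice T c)) \<le> (p - r2 + 1) * (p - r1 + 1)
          \<and> (\<forall>f \<in> puncture C (zslice T c). f \<noteq> 0 \<longrightarrow> r1 * r2 \<le> weight (zslice T c) f))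
       \<and> card T = 2*p^4 - 3*p^3 + 2*p^2 - p
       \<and> code_dim C = (p - r2 + 1) * (p - r1 + 1) * (p^2 - 2*p + 1)
       \<and> (\<forall>f \<in> C. f \<noteq> 0 \<longrightarrow> (r1 + r2 - 3) * p + (r1 + r2) \<le> weight T f)"
proof -
  interpret ffp p "TYPE('a)" using assms(1-3) by unfold_locales auto
  show ?thesis unfolding T_def C_def code_dim_fv
  proof (intro conjI allI impI ballI)
    fix a b c assume abc: "(a, b, c) \<in> (Tset p :: 'a pt set)"
    show "fiber a b c \<subseteq> zslice (Tset p) c" by (rule fiber_sub[OF abc])
  next
    fix a b c assume abc: "(a, b, c) \<in> (Tset p :: 'a pt set)"
    show "zslice (Tset p) c \<subseteq> (Tset p :: 'a pt set)" unfolding zslice_def by auto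
  next
    fix a b c assume abc: "(a, b, c) \<in> (Tset p :: 'a pt set)"
    show "card (fiber a b c) = p" by (rule card_fiber[OF abc])
  next
    fix a b c assume abc: "(a, b, c) \<in> (Tset p :: 'a pt set)"
    show "fv.dim (puncture (evcode (Vspace p r1 r2) (Tset p :: 'a pt set)) (fiber a b c)) \<le> p - r2 + 1"
      by (rule lower_dim[OF abc])
  next
    fix a b c f assume abc: "(a, b, c) \<in> (Tset p :: 'a pt set)"
      and f: "f \<in> puncture (evcode (Vspace p r1 r2) (Tset p :: 'a pt set)) (fiber a b c)" and f0: "f \<noteq> 0"
    show "r2 \<le> weight (fiber a b c) f" by (rule lower_wt[OF abc assms(7) f f0])
  next
    fix a b c assume abc: "(a, b, c) \<in> (Tset p :: 'a pt set)"
    then have cz: "c \<noteq> 0" unfolding Tset_def by simp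
    have "card (zslice (Tset p :: 'a pt set) c) = p * card (Xs c)" by (rule card_zslice[OF cz])
    also have "\<dots> \<le> p * (2*p - 1)" using card_Xs_bounds(2)[OF cz] by simp
    also have "\<dots> = 2*p^2 - p" by (simp add: diff_mult_distrib2 power2_eq_square mult_ac)
    finally show "card (zslice (Tset p :: 'a pt set) c) \<le> 2*p^2 - p" .
  next
    fix a b c assume abc: "(a, b, c) \<in> (Tset p :: 'a pt set)"
    then have cz: "c \<noteq> 0" unfolding Tset_def by simp
    show "fv.dim (puncture (evcode (Vspace p r1 r2) (Tset p :: 'a pt set)) (zslice (Tset p) c))
         \<le> (p - r2 + 1) * (p - r1 + 1)" by (rule middle_dim[OF cz])
  next
    fix a b c f assume abc: "(a, b, c) \<in> (Tset p :: 'a pt set)"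
      and f: "f \<in> puncture (evcode (Vspace p r1 r2) (Tset p :: 'a pt set)) (zslice (Tset p) c)" and f0: "f \<noteq> 0"
    then have cz: "c \<noteq> 0" unfolding Tset_def by simp
    show "r1 * r2 \<le> weight (zslice (Tset p) c) f" by (rule middle_wt[OF cz assms(5) assms(7) f f0])
  next
    show "card (Tset p :: 'a pt set) = 2*p^4 - 3*p^3 + 2*p^2 - p" by (rule card_T)
  next
    show "fv.dim (evcode (Vspace p r1 r2) (Tset p :: 'a pt set)) = (p - r2 + 1) * (p - r1 + 1) * (p^2 - 2*p + 1)"
      by (rule full_dim[OF assms(4-7)])
  next
    fix f assume f: "f \<in> evcode (Vspace p r1 r2) (Tset p :: 'a pt set)" and f0: "f \<noteq> 0"
    show "(r1 + r2 - 3) * p + (r1 + r2) \<le> weight (Tset p) f" by (rule full_wt[OF assms(4-7) f f0])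
  qed
qed

end
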